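(* Let $u(t) = \frac{t-1}{t\log t}$ for $t>0$, $t\neq1$, $u(1)=1$, and consider on $\mathbb C^\ast = \mathbb C\setminus\{0\}$ the conformal metric $g(z,X) = \big(1 + |z|^2 u^2(|z|^2)\big)|X|^2$. Let $\kappa(z)$ denote its Gaussian curvature at $z$. Then $\kappa(z) \le 0$ for all $z \in \mathbb C^\ast$, $\kappa(z) \to -4$ as $z \to 0$, and $\kappa(z) \to 0$ as $|z| \to \infty$.
   Context: For a conformal metric $h(z)|dz|^2$ on a planar domain, the Gaussian curvature is $-2h^{-1}\,\partial^2\log h/\partial z\partial\overline z$. *)

theory Defs
  imports "HOL-Analysis.Analysis"
begin

definition dxx :: "(complex \<Rightarrow> real) \<Rightarrow> complex \<Rightarrow> real" where
  "dxx f z = deriv (\<lambda>a. deriv (\<lambda>b. f (Complex b (Im z))) a) (Re z)"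

definition dyy :: "(complex \<Rightarrow> real) \<Rightarrow> complex \<Rightarrow> real" where
  "dyy f z = deriv (\<lambda>a. deriv (\<lambda>b. f (Complex (Re z) b)) a) (Im z)"

text \<open>The operator d^2/dz dzbar = (1/4)(d^2/dx^2 + d^2/dy^2).\<close>
definition ddbar :: "(complex \<Rightarrow> real) \<Rightarrow> complex \<Rightarrow> real" where
  "ddbar f z = (dxx f z + dyy f z) / 4"

text \<open>Gaussian curvature of the conformal metric h(z)|dz|^2.\<close>
definition gauss_curv :: "(complex \<Rightarrow> real) \<Rightarrow> complex \<Rightarrow> real" where
  "gauss_curv h z = - 2 / h z * ddbar (\<lambda>w. ln (h w)) z"

definition uu :: "real \<Rightarrow> real" where
  "uu t = (if t = 1 then 1 else (t - 1) / (t * ln t))"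

definition hh :: "complex \<Rightarrow> real" where
  "hh z = 1 + (cmod z)^2 * (uu ((cmod z)^2))^2"

end

theory Submission
  imports Defs "HOL-Real_Asymp.Real_Asymp"
begin

definition FF :: "real \<Rightarrow> real" where
  "FF x = (if x = 0 then 1 else sinh x / x)"
definition F1 :: "real \<Rightarrow> real" where
  "F1 x = (if x = 0 then 0 else (x * cosh x - sinh x) / x^2)"
definition F2 :: "real \<Rightarrow> real" where
  "F2 x = (if x = 0 then 1/3 else (x^2 * sinh x - 2*x* cosh x + 2* sinh x) / x^3)"

lemma FF_deriv: "(FF has_real_derivative F1 x) (at x)"
proof (cases "x = 0")
  case True
  have "((\<lambda>y::real. (sinh y / y - 1) / y) \<longlongrightarrow> 0) (at 0)"
    unfolding sinh_field_def by real_asymp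
  moreover have "eventually (\<lambda>y. (sinh y / y - 1) / y = (FF y - FF 0) / (y - 0)) (at (0::real))"
    using eventually_neq_at_within[of 0 0 UNIV] by eventually_elim (simp add: FF_def)
  ultimately have "((\<lambda>y. (FF y - FF 0) / (y - 0)) \<longlongrightarrow> 0) (at 0)"
    by (rule Lim_transform_eventually)
  then show ?thesis using True by (simp add: has_field_derivative_iff F1_def)
next
  case False
  have d: "((\<lambda>y. sinh y / y) has_real_derivative (x * cosh x - sinh x) / x^2) (at x)"
    using False apply (auto intro!: derivative_eq_intros)
    apply (simp add: power2_eq_square mult.commute)
    done
  have e: "F1 x = (x * cosh x - sinh x) / x^2" using False by (simp add: F1_def)
  show ?thesis unfolding e
    by (rule has_field_derivative_transform_within_open[OF d, where S="-{0}"])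
       (use False in \<open>auto simp: FF_def\<close>)
qed

lemma F1_deriv_aux: "x \<noteq> 0 \<Longrightarrow> ((\<lambda>y. (y * cosh y - sinh y) / y^2) has_real_derivative (x^2 * sinh x - 2 * x * cosh x + 2 * sinh x) / x^3) (at x)"
  apply (auto intro!: derivative_eq_intros)
proof -
  assume x: "x \<noteq> 0"
  have "sinh x * x * x\<^sup>2 - (x * cosh x - sinh x) * (2 * x) = x * (x^2 * sinh x - 2 * x * cosh x + 2 * sinh x)"
    by (simp add: algebra_simps power2_eq_square)
  moreover have "(x::real)^4 = x * x^3" by (simp add: power_Suc[symmetric] del: power_Suc)
  ultimately show "(sinh x * x * x\<^sup>2 - (x * cosh x - sinh x) * (2 * x)) / x ^ 4 =
     (x\<^sup>2 * sinh x - 2 * x * cosh x + 2 * sinh x) / x ^ 3" using x by simp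
qed

lemma F1_deriv: "(F1 has_real_derivative F2 x) (at x)"
proof (cases "x = 0")
  case True
  have "((\<lambda>y::real. ((y * cosh y - sinh y)/y^2 - 0) / y) \<longlongrightarrow> 1/3) (at 0)"
    unfolding sinh_field_def cosh_field_def by real_asymp
  moreover have "eventually (\<lambda>y. ((y * cosh y - sinh y)/y^2 - 0) / y = (F1 y - F1 0) / (y - 0)) (at (0::real))"
    using eventually_neq_at_within[of 0 0 UNIV] by eventually_elim (simp add: F1_def)
  ultimately have "((\<lambda>y. (F1 y - F1 0) / (y - 0)) \<longlongrightarrow> 1/3) (at 0)"
    by (rule Lim_transform_eventually)
  then show ?thesis using True by (simp add: has_field_derivative_iff F2_def)
next
  case False
  have e: "F2 x = (x^2 * sinh x - 2 * x * cosh x + 2 * sinh x) / x^3" using False by (simp add: F2_def)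
  show ?thesis unfolding e
    by (rule has_field_derivative_transform_within_open[OF F1_deriv_aux[OF False], where S="-{0}"])
       (use False in \<open>auto simp: F1_def\<close>)
qed

lemma sinh_ge_self: "x \<ge> 0 \<Longrightarrow> sinh x \<ge> (x::real)"
proof -
  assume x: "x \<ge> 0"
  have "(\<lambda>y. sinh y - y) 0 \<le> (\<lambda>y. sinh y - y) x"
    by (rule DERIV_nonneg_imp_nondecreasing[OF x])
       (auto intro!: exI derivative_eq_intros simp: cosh_real_ge_1)
  then show ?thesis by simp
qed

lemma sinh_sq_ge: "(sinh x)^2 \<ge> (x::real)^2"
proof (cases "x \<ge> 0")
  case True
  then show ?thesis using sinh_ge_self[OF True] by (simp add: power_mono)
next
  case False
  then have "sinh (-x) \<ge> -x" using sinh_ge_self[of "-x"] by simp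
  then have "(-x)^2 \<le> (sinh (-x))^2" using False by (intro power_mono) auto
  then show ?thesis by (simp add: sinh_minus)
qed

lemma FF_pos: "FF x > 0"
proof -
  consider "x = 0" | "x > 0" | "x < 0" by linarith
  then show ?thesis
  proof cases
    case 1 then show ?thesis by (simp add: FF_def)
  next
    case 2 then have "sinh x > 0" by simp
    with 2 show ?thesis by (simp add: FF_def)
  next
    case 3 then have "sinh x < 0" by simp
    with 3 show ?thesis by (simp add: FF_def divide_neg_neg)
  qed
qed

lemma D_closed: "x \<noteq> 0 \<Longrightarrow> FF x * F2 x - (F1 x)^2 = ((sinh x)^2 - x^2) / x^4"
proof -
  assume False: "x \<noteq> 0"
  define s where "s = sinh x"
  define c where "c = cosh x"
  have c2: "c^2 - s^2 = 1" unfolding s_def c_def using cosh_square_eq[of x] by simp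
  have e1: "FF x * F2 x = s * (x^2 * s - 2 * x * c + 2 * s) / x^4"
    using False by (simp add: FF_def F2_def s_def c_def power2_eq_square power3_eq_cube power4_eq_xxxx)
  have e2: "(F1 x)^2 = (x * c - s)^2 / x^4"
    using False by (simp add: F1_def s_def c_def power_divide flip: power_mult)
  have e3: "s * (x^2 * s - 2 * x * c + 2 * s) - (x * c - s)^2 = s^2 - x^2 * (c^2 - s^2)"
    by (simp add: algebra_simps power2_eq_square)
  have "FF x * F2 x - (F1 x)^2 = (s^2 - x^2) / x^4"
    unfolding e1 e2 by (simp add: diff_divide_distrib[symmetric] e3 c2)
  then show "FF x * F2 x - (F1 x)^2 = ((sinh x)^2 - x^2) / x^4" by (simp add: s_def)
qed

lemma logconv: "FF x * F2 x \<ge> (F1 x)^2"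
proof (cases "x = 0")
  case True then show ?thesis by (simp add: FF_def F1_def F2_def)
next
  case False
  have "0 \<le> ((sinh x)^2 - x^2) / x^4" using sinh_sq_ge[of x] by simp
  then show ?thesis using D_closed[OF False] by simp
qed

definition Gt :: "real \<Rightarrow> real" where "Gt x = ln (1 + (FF x)^2)"
definition G1 :: "real \<Rightarrow> real" where "G1 x = 2 * FF x * F1 x / (1 + (FF x)^2)"
definition G2 :: "real \<Rightarrow> real" where
  "G2 x = (2 * (F1 x)^2 * (1 - (FF x)^2) + 2 * FF x * F2 x * (1 + (FF x)^2)) / (1 + (FF x)^2)^2"

lemma onep_pos: "1 + (FF x)^2 > 0"
  by (simp add: add_pos_nonneg)

lemma Gt_deriv: "(Gt has_real_derivative G1 x) (at x)"
proof -
  have "((\<lambda>x. ln (1 + (FF x)^2)) has_real_derivative G1 x) (at x)"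
    using onep_pos[of x]
    by (auto intro!: derivative_eq_intros FF_deriv simp: G1_def field_simps)
  then show ?thesis by (simp add: Gt_def[abs_def])
qed

lemma alg1: "((b * 2 * b + c * (2 * a)) * (1 + a^2) - 4 * (a * (b * (b * a)))) / ((1 + a^2) * (1 + a^2))
   = (2 * b^2 * (1 - a^2) + 2 * a * c * (1 + a^2)) / (1 + a^2)^2" for a b c :: real
proof -
  have n: "(b * 2 * b + c * (2 * a)) * (1 + a^2) - 4 * (a * (b * (b * a)))
         = 2 * b^2 * (1 - a^2) + 2 * a * c * (1 + a^2)"
    by (simp add: algebra_simps power2_eq_square)
  show ?thesis by (subst n) (simp add: power2_eq_square)
qed

lemma G1_deriv: "(G1 has_real_derivative G2 x) (at x)"
proof -
  have "((\<lambda>x. 2 * FF x * F1 x / (1 + (FF x)^2)) has_real_derivative G2 x) (at x)"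
    using onep_pos[of x]
    apply (auto intro!: derivative_eq_intros FF_deriv F1_deriv)
    apply (simp only: alg1 G2_def)
    done
  then show ?thesis by (simp add: G1_def[abs_def])
qed

lemma G2_nonneg: "G2 x \<ge> 0"
proof -
  define a where "a = FF x"
  define b where "b = F1 x"
  define c where "c = F2 x"
  have ac: "a * c \<ge> b^2" using logconv[of x] by (simp add: a_def b_def c_def)
  have e: "2 * b^2 * (1 - a^2) + 2 * a * c * (1 + a^2) = 4 * b^2 + 2 * ((a * c - b^2) * (1 + a^2))"
    by (simp add: algebra_simps)
  have "0 \<le> 4 * b^2 + 2 * ((a * c - b^2) * (1 + a^2))"
    using ac by (intro add_nonneg_nonneg mult_nonneg_nonneg) auto
  then have "2 * b^2 * (1 - a^2) + 2 * a * c * (1 + a^2) \<ge> 0" by (simp only: e)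
  then show ?thesis unfolding G2_def a_def[symmetric] b_def[symmetric] c_def[symmetric] by simp
qed

lemma radial_1d:
  fixes L L1 L2 g :: "real \<Rightarrow> real"
  assumes dL: "\<And>t. t > 0 \<Longrightarrow> (L has_real_derivative L1 t) (at t)"
    and dL1: "\<And>t. t > 0 \<Longrightarrow> (L1 has_real_derivative L2 t) (at t)"
    and g: "\<And>b. b^2 + c^2 > 0 \<Longrightarrow> g b = L (b^2 + c^2)"
    and a: "a^2 + c^2 > 0"
  shows "deriv (\<lambda>a. deriv g a) a = 2 * L1 (a^2 + c^2) + 4 * a^2 * L2 (a^2 + c^2)"
proof -
  define U where "U = {b::real. 0 < b^2 + c^2}"
  have U: "open U" unfolding U_def by (intro open_Collect_less continuous_intros)
  have d1: "deriv g b = 2 * b * L1 (b^2 + c^2)" if b: "b \<in> U" for b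
  proof -
    have i: "((\<lambda>b. b^2 + c^2) has_real_derivative 2 * b) (at b)"
      by (auto intro!: derivative_eq_intros)
    have "((\<lambda>b. L (b^2 + c^2)) has_real_derivative L1 (b^2 + c^2) * (2 * b)) (at b)"
      by (rule DERIV_chain2[OF dL i]) (use b in \<open>simp add: U_def\<close>)
    then have "(g has_real_derivative L1 (b^2 + c^2) * (2 * b)) (at b)"
      by (rule has_field_derivative_transform_within_open[OF _ U b]) (simp add: g U_def)
    then show ?thesis by (simp add: DERIV_imp_deriv)
  qed
  have aU: "a \<in> U" using a by (simp add: U_def)
  have i: "((\<lambda>b. b^2 + c^2) has_real_derivative 2 * a) (at a)"
    by (auto intro!: derivative_eq_intros)
  have c1: "((\<lambda>b. L1 (b^2 + c^2)) has_real_derivative L2 (a^2 + c^2) * (2 * a)) (at a)"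
    by (rule DERIV_chain2[OF dL1 i]) (use a in simp)
  have "((\<lambda>b. 2 * b * L1 (b^2 + c^2)) has_real_derivative
        2 * L1 (a^2 + c^2) + 2 * a * (L2 (a^2 + c^2) * (2 * a))) (at a)"
    using DERIV_mult[OF DERIV_cmult_Id[of 2 a] c1] by (simp add: algebra_simps)
  then have "((\<lambda>b. deriv g b) has_real_derivative
        2 * L1 (a^2 + c^2) + 2 * a * (L2 (a^2 + c^2) * (2 * a))) (at a)"
    by (rule has_field_derivative_transform_within_open[OF _ U aU]) (simp add: d1)
  then have "deriv (\<lambda>a. deriv g a) a = 2 * L1 (a^2 + c^2) + 2 * a * (L2 (a^2 + c^2) * (2 * a))"
    by (simp add: DERIV_imp_deriv)
  then show ?thesis by (simp add: power2_eq_square algebra_simps)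
qed

lemma radial_ddbar:
  fixes L L1 L2 :: "real \<Rightarrow> real" and f :: "complex \<Rightarrow> real"
  assumes f: "\<And>w. w \<noteq> 0 \<Longrightarrow> f w = L ((cmod w)^2)"
    and dL: "\<And>t. t > 0 \<Longrightarrow> (L has_real_derivative L1 t) (at t)"
    and dL1: "\<And>t. t > 0 \<Longrightarrow> (L1 has_real_derivative L2 t) (at t)"
    and z: "z \<noteq> 0"
  shows "ddbar f z = L1 ((cmod z)^2) + (cmod z)^2 * L2 ((cmod z)^2)"
proof -
  have pos: "(Re z)^2 + (Im z)^2 > 0" using z
    by (metis cmod_power2 zero_less_norm_iff zero_less_power)
  have nz: "Complex b c \<noteq> 0" if "b^2 + c^2 > 0" for b c
    using that by (auto simp: complex_eq_iff)
  have nm: "(cmod (Complex b c))^2 = b^2 + c^2" for b c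
    by (simp add: cmod_power2)
  have x: "dxx f z = 2 * L1 ((Re z)^2 + (Im z)^2) + 4 * (Re z)^2 * L2 ((Re z)^2 + (Im z)^2)"
    unfolding dxx_def
  proof (rule radial_1d[OF dL dL1 _ pos])
    fix b assume h: "0 < b^2 + (Im z)^2"
    show "f (Complex b (Im z)) = L (b^2 + (Im z)^2)" using f[OF nz[OF h]] nm[of b "Im z"] by simp
  qed
  have y: "dyy f z = 2 * L1 ((Im z)^2 + (Re z)^2) + 4 * (Im z)^2 * L2 ((Im z)^2 + (Re z)^2)"
    unfolding dyy_def
  proof (rule radial_1d[OF dL dL1])
    fix b assume h: "0 < b^2 + (Re z)^2"
    then have h': "0 < (Re z)^2 + b^2" by (simp add: add.commute)
    show "f (Complex (Re z) b) = L (b^2 + (Re z)^2)" using f[OF nz[OF h']] nm[of "Re z" b] by (simp add: add.commute)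
  next
    show "0 < (Im z)^2 + (Re z)^2" using pos by (simp add: add.commute)
  qed
  show ?thesis
    unfolding ddbar_def x y cmod_power2 by (simp add: add.commute algebra_simps)
qed

definition L :: "real \<Rightarrow> real" where "L = (\<lambda>t. Gt (ln t / 2))"
definition L1 :: "real \<Rightarrow> real" where "L1 = (\<lambda>t. G1 (ln t / 2) / (2 * t))"
definition L2 :: "real \<Rightarrow> real" where
  "L2 = (\<lambda>t. G2 (ln t / 2) / (4 * t^2) - G1 (ln t / 2) / (2 * t^2))"

lemma L_deriv: "t > 0 \<Longrightarrow> (L has_real_derivative L1 t) (at t)"
proof -
  assume t: "t > 0"
  have d: "((\<lambda>t. ln t / 2) has_real_derivative 1 / (2 * t)) (at t)"
    using t by (auto intro!: derivative_eq_intros)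
  have "((\<lambda>t. Gt (ln t / 2)) has_real_derivative G1 (ln t / 2) * (1 / (2 * t))) (at t)"
    by (rule DERIV_chain2[OF Gt_deriv d])
  then show ?thesis by (simp add: L_def L1_def)
qed

lemma L1_deriv: "t > 0 \<Longrightarrow> (L1 has_real_derivative L2 t) (at t)"
proof -
  assume t: "t > 0"
  have d: "((\<lambda>t. ln t / 2) has_real_derivative 1 / (2 * t)) (at t)"
    using t by (auto intro!: derivative_eq_intros)
  have c: "((\<lambda>t. G1 (ln t / 2)) has_real_derivative G2 (ln t / 2) * (1 / (2 * t))) (at t)"
    by (rule DERIV_chain2[OF G1_deriv d])
  have "((\<lambda>t. G1 (ln t / 2) / (2 * t)) has_real_derivative
      (G2 (ln t / 2) * (1 / (2 * t)) * (2 * t) - G1 (ln t / 2) * 2) / ((2 * t) * (2 * t))) (at t)"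
    by (rule DERIV_divide[OF c DERIV_cmult_Id]) (use t in simp)
  moreover have "(G2 (ln t / 2) * (1 / (2 * t)) * (2 * t) - G1 (ln t / 2) * 2) / ((2 * t) * (2 * t)) = L2 t"
    using t by (simp add: L2_def field_simps power2_eq_square)
  ultimately show ?thesis by (simp add: L1_def)
qed

lemma hh_FF: "w \<noteq> 0 \<Longrightarrow> hh w = 1 + (FF (ln (cmod w)))^2"
proof -
  assume w: "w \<noteq> 0"
  define r where "r = cmod w"
  have r: "r > 0" using w by (simp add: r_def)
  show ?thesis
  proof (cases "r = 1")
    case True
    then show ?thesis by (simp add: hh_def uu_def FF_def r_def[symmetric])
  next
    case False
    define s where "s = ln r"
    have s: "s \<noteq> 0" using r False by (simp add: s_def)
    have t1: "r^2 \<noteq> 1" using r False by (simp add: power2_eq_1_iff)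
    have lt: "ln (r^2) = 2 * s" using r by (simp add: s_def ln_realpow)
    have sh: "sinh s = (r - inverse r) / 2"
      using r by (simp add: sinh_field_def s_def exp_minus)
    have "hh w = 1 + r^2 * ((r^2 - 1) / (r^2 * (2 * s)))^2"
      by (simp add: hh_def uu_def r_def[symmetric] t1 lt)
    also have "\<dots> = 1 + ((r - inverse r) / 2 / s)^2"
      using r s by (simp add: field_simps power2_eq_square)
    also have "\<dots> = 1 + (FF (ln (cmod w)))^2"
      by (simp add: FF_def r_def[symmetric] s_def[symmetric] s sh)
    finally show ?thesis .
  qed
qed

lemma ln_hh: "w \<noteq> 0 \<Longrightarrow> ln (hh w) = L ((cmod w)^2)"
  by (simp add: hh_FF L_def Gt_def ln_realpow)

definition Kf :: "real \<Rightarrow> real" where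
  "Kf x = - G2 x / (2 * exp (2 * x) * (1 + (FF x)^2))"

lemma alg_L: "t > 0 \<Longrightarrow> A / (2 * t) + t * (B / (4 * t^2) - A / (2 * t^2)) = B / (4 * t)"
  for t A B :: real
  by (simp add: field_simps power2_eq_square)

lemma alg_K: "d > 0 \<Longrightarrow> e > 0 \<Longrightarrow> - 2 / d * (g / (4 * e)) = - g / (2 * e * d)"
  for d e g :: real
  by (simp add: field_simps)

lemma curv_Kf: "z \<noteq> 0 \<Longrightarrow> gauss_curv hh z = Kf (ln (cmod z))"
proof -
  assume z: "z \<noteq> 0"
  define r where "r = cmod z"
  have r: "r > 0" using z by (simp add: r_def)
  define s where "s = ln r"
  have lt: "ln (r^2) / 2 = s" unfolding s_def ln_realpow by simp
  have ex: "exp (2 * s) = r^2" unfolding s_def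
    by (simp only: mult_2 exp_add exp_ln[OF r] power2_eq_square)
  have dd: "ddbar (\<lambda>w. ln (hh w)) z = L1 (r^2) + r^2 * L2 (r^2)"
    unfolding r_def by (rule radial_ddbar[OF ln_hh L_deriv L1_deriv z])
  have r2: "r^2 > 0" using r by simp
  have sum: "L1 (r^2) + r^2 * L2 (r^2) = G2 s / (4 * exp (2 * s))"
    unfolding L1_def L2_def lt ex by (rule alg_L[OF r2])
  have "gauss_curv hh z = - 2 / (1 + (FF s)^2) * (G2 s / (4 * exp (2 * s)))"
    unfolding gauss_curv_def dd sum hh_FF[OF z] r_def[symmetric] s_def[symmetric] ..
  also have "\<dots> = Kf s"
    unfolding Kf_def by (rule alg_K[OF onep_pos exp_gt_zero])
  finally show ?thesis by (simp add: s_def r_def)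
qed

lemma Kf_nonpos: "Kf x \<le> 0"
  unfolding Kf_def using G2_nonneg[of x] onep_pos[of x]
  by (intro divide_nonpos_pos) auto

definition Kc :: "real \<Rightarrow> real" where
  "Kc x = - (2 * ((x * cosh x - sinh x) / x^2)^2
     + 2 * (sinh x / x) * ((x^2 * sinh x - 2 * x * cosh x + 2 * sinh x) / x^3)
     + 2 * (sinh x / x)^2 * (((sinh x)^2 - x^2) / x^4))
     / (2 * exp (2 * x) * (1 + (sinh x / x)^2)^3)"

lemma Kf_alt: "Kf x = - (2 * (F1 x)^2 + 2 * FF x * F2 x + 2 * (FF x)^2 * (FF x * F2 x - (F1 x)^2))
     / (2 * exp (2 * x) * (1 + (FF x)^2)^3)"
proof -
  define a where "a = FF x"
  define b where "b = F1 x"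
  define c where "c = F2 x"
  define d where "d = 1 + a^2"
  have d: "d > 0" unfolding d_def by (simp add: add_pos_nonneg)
  have N: "2 * b^2 * (1 - a^2) + 2 * a * c * (1 + a^2) = 2 * b^2 + 2 * a * c + 2 * a^2 * (a * c - b^2)"
    by (simp add: algebra_simps)
  have "Kf x = - (2 * b^2 * (1 - a^2) + 2 * a * c * (1 + a^2)) / (2 * exp (2 * x) * d^3)"
    unfolding Kf_def G2_def a_def[symmetric] b_def[symmetric] c_def[symmetric] d_def[symmetric]
    using d by (simp add: power2_eq_square power3_eq_cube field_simps)
  also have "\<dots> = - (2 * b^2 + 2 * a * c + 2 * a^2 * (a * c - b^2)) / (2 * exp (2 * x) * d^3)"
    by (simp only: N)
  finally show ?thesis by (simp only: a_def b_def c_def d_def)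
qed

lemma Kf_Kc: "x \<noteq> 0 \<Longrightarrow> Kf x = Kc x"
  unfolding Kf_alt Kc_def by (simp add: D_closed) (simp add: FF_def F1_def F2_def)

lemma Kc_top: "(Kc \<longlongrightarrow> 0) at_top"
  unfolding Kc_def sinh_field_def cosh_field_def by real_asymp

lemma Kc_bot: "(Kc \<longlongrightarrow> -4) at_bot"
proof -
  have "((\<lambda>x. Kc (-x)) \<longlongrightarrow> -((1/2)^4 * inverse((1/2)^6))) at_top"
    unfolding Kc_def sinh_field_def cosh_field_def by real_asymp
  moreover have "-((1/2)^4 * inverse((1/2)^6)) = (-4::real)"
    by (simp add: power_one_over)
  ultimately have "((\<lambda>x. Kc (-x)) \<longlongrightarrow> -4) at_top" by simp
  then show ?thesis by (simp add: filterlim_at_bot_mirror)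
qed

lemma Kf_top: "(Kf \<longlongrightarrow> 0) at_top"
proof -
  have "eventually (\<lambda>x. Kc x = Kf x) at_top"
    using eventually_gt_at_top[of 0] by eventually_elim (simp add: Kf_Kc)
  then show ?thesis by (rule Lim_transform_eventually[OF Kc_top])
qed

lemma Kf_bot: "(Kf \<longlongrightarrow> -4) at_bot"
proof -
  have "eventually (\<lambda>x. Kc x = Kf x) at_bot"
    using eventually_gt_at_bot[of 0] by eventually_elim (simp add: Kf_Kc)
  then show ?thesis by (rule Lim_transform_eventually[OF Kc_bot])
qed

theorem mainTheorem3:
  shows "(\<forall>z::complex. z \<noteq> 0 \<longrightarrow> gauss_curv hh z \<le> 0)
       \<and> (gauss_curv hh \<longlongrightarrow> -4) (at 0)
       \<and> (gauss_curv hh \<longlongrightarrow> 0) at_infinity"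
proof (intro conjI allI impI)
  fix z :: complex assume "z \<noteq> 0"
  then show "gauss_curv hh z \<le> 0" by (simp add: curv_Kf Kf_nonpos)
next
  have n0: "filterlim (\<lambda>z::complex. cmod z) (at_right 0) (at 0)"
    unfolding filterlim_at
    by (auto simp: eventually_at_filter intro!: tendsto_norm_zero tendsto_ident_at)
  have l0: "filterlim (\<lambda>z::complex. ln (cmod z)) at_bot (at 0)"
    by (rule filterlim_compose[OF ln_at_0 n0])
  have "((\<lambda>z. Kf (ln (cmod z))) \<longlongrightarrow> -4) (at (0::complex))"
    by (rule filterlim_compose[OF Kf_bot l0])
  moreover have "eventually (\<lambda>z. Kf (ln (cmod z)) = gauss_curv hh z) (at (0::complex))"
    by (simp add: eventually_at_filter curv_Kf)
  ultimately show "(gauss_curv hh \<longlongrightarrow> -4) (at 0)"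
    by (rule Lim_transform_eventually)
next
  have l1: "filterlim (\<lambda>z::complex. ln (cmod z)) at_top at_infinity"
    by (rule filterlim_compose[OF ln_at_top filterlim_norm_at_top])
  have "((\<lambda>z. Kf (ln (cmod z))) \<longlongrightarrow> 0) (at_infinity :: complex filter)"
    by (rule filterlim_compose[OF Kf_top l1])
  moreover have "eventually (\<lambda>z::complex. z \<noteq> 0) at_infinity"
    unfolding eventually_at_infinity by (rule exI[of _ 1]) auto
  then have "eventually (\<lambda>z. Kf (ln (cmod z)) = gauss_curv hh z) (at_infinity :: complex filter)"
    by eventually_elim (simp add: curv_Kf)
  ultimately show "(gauss_curv hh \<longlongrightarrow> 0) at_infinity"
    by (rule Lim_transform_eventually)
qed

end
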